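(* Let $c,d>0$ with $cd\le1$, $g(x)=xF(c,d;c+d;x)$ for $x\in(0,1)$, and $b\ge a>0$. Then for every $s\ge1$, $$1\le\frac{g\!\left(\frac{s^b}{1+s^b}\right)}{g\!\left(\frac{s^a}{1+s^a}\right)}\le\frac ba.$$
   Context: $F(a,b;c;x)$ is the Gaussian hypergeometric function $\sum_{n\ge0}\frac{(a)_n(b)_n}{(c)_n}\frac{x^n}{n!}$ ($|x|<1$), with $(a)_n=a(a+1)\cdots(a+n-1)$, $(a)_0=1$. (In the claim, $a,b$ denote the exponents, not hypergeometric parameters.) *)

theory Defs
  imports "HOL-Analysis.Analysis"
begin

text \<open>Gaussian hypergeometric function F(a,b;c;x) = sum_n (a)_n (b)_n / (c)_n x^n / n!,
  intended for |x| < 1 (where the series converges for the parameters used).\<close>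
definition hyp2F1 :: "real \<Rightarrow> real \<Rightarrow> real \<Rightarrow> real \<Rightarrow> real" where
  "hyp2F1 a b c x = (\<Sum>n. pochhammer a n * pochhammer b n / pochhammer c n * x ^ n / fact n)"

end

theory Submission
  imports Defs
begin

definition sg :: "real \<Rightarrow> real" where "sg u = exp u / (1 + exp u)"

lemma ep: "1 + exp u > (0::real)" by (smt (verit) exp_gt_zero)
lemma epn: "1 + exp u \<noteq> (0::real)" using ep[of u] by linarith

lemma sg_bounds: "0 < sg u" "sg u < 1" using ep[of u] by (auto simp: sg_def divide_simps)

lemma sg_mono: "u \<le> v \<Longrightarrow> sg u \<le> sg v"
  using ep[of u] ep[of v] exp_le_cancel_iff[of u v]
  by (auto simp: sg_def divide_simps algebra_simps)

context
  fixes c d :: real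
  assumes cpos: "c > 0" and dpos: "d > 0" and cd1: "c * d \<le> 1"
begin

definition A :: "nat \<Rightarrow> real" where
  "A n = pochhammer c n * pochhammer d n / pochhammer (c+d) n / fact n"

definition D :: "nat \<Rightarrow> real" where "D n = real (Suc n) * A n"

definition ga :: "nat \<Rightarrow> real" where "ga n = (case n of 0 \<Rightarrow> 0 | Suc m \<Rightarrow> A m)"

definition G :: "real \<Rightarrow> real" where "G x = (\<Sum>n. ga n * x ^ n)"
definition G' :: "real \<Rightarrow> real" where "G' x = (\<Sum>n. D n * x ^ n)"

lemma A_pos: "A n > 0"
  unfolding A_def using cpos dpos by (auto intro!: divide_pos_pos mult_pos_pos pochhammer_pos)

lemma A_0: "A 0 = 1" by (simp add: A_def)

lemma A_Suc: "A (Suc n) = A n * ((c + n) * (d + n) / ((c + d + n) * (n + 1)))"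
proof -
  have "pochhammer (c+d) n > 0" using cpos dpos by (intro pochhammer_pos) auto
  moreover have "c + d + n > 0" using cpos dpos by simp
  ultimately show ?thesis
    unfolding A_def pochhammer_rec' fact_Suc by (simp add: field_simps)
qed

lemma cd_le: "c + d \<ge> 2 * c * d"
proof -
  have h: "(c+d)*(c+d) \<ge> 4*(c*d)" using zero_le_square[of "c-d"] by (simp add: algebra_simps)
  have h2: "4*(c*d) \<ge> (2*c*d)*(2*c*d)"
  proof -
    have "(c*d)*(c*d) \<le> c*d" using cd1 cpos dpos by (simp add: mult_left_le)
    then show ?thesis by (simp add: algebra_simps)
  qed
  show ?thesis
  proof (rule ccontr)
    assume "\<not> ?thesis"
    then have "c + d < 2*c*d" by simp
    then have "(c+d)*(c+d) < (2*c*d)*(2*c*d)" using cpos dpos by (intro mult_strict_mono) auto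
    then show False using h h2 by simp
  qed
qed

lemma D_Suc_le: "D (Suc n) \<le> D n"
proof -
  have key: "(n+2) * ((c + n) * (d + n)) \<le> (n+1)^2 * (c + d + n)"
  proof -
    have "(n+1)^2 * (c + d + n) - (n+2) * ((c + n) * (d + n)) = c + d + n - (n+2)*(c*d)"
      by (simp add: power2_eq_square algebra_simps)
    also have "\<dots> \<ge> n * (1 - c*d)" using cd_le by (simp add: algebra_simps)
    also have "n * (1 - c*d) \<ge> 0" using cd1 by simp
    finally show ?thesis by simp
  qed
  have pos: "(c + d + n) * (n + 1) > 0" using cpos dpos by simp
  have "D (Suc n) = A n * ((n+2) * ((c + n) * (d + n)) / ((c + d + n) * (n + 1)))"
    unfolding D_def A_Suc by (simp add: field_simps)
  also have "\<dots> \<le> A n * ((n+1)^2 * (c + d + n) / ((c + d + n) * (n + 1)))"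
    using key pos A_pos[of n] by (intro mult_left_mono divide_right_mono) auto
  also have "\<dots> = D n" unfolding D_def using pos by (simp add: field_simps power2_eq_square)
  finally show ?thesis .
qed

lemma D_pos: "D n > 0" unfolding D_def using A_pos by simp

lemma D_le1: "D n \<le> 1"
proof (induction n)
  case 0 then show ?case by (simp add: D_def A_0)
next
  case (Suc n) then show ?case using D_Suc_le[of n] by simp
qed

lemma ga_bound: "\<bar>ga n\<bar> \<le> 1"
proof (cases n)
  case 0 then show ?thesis by (simp add: ga_def)
next
  case (Suc m)
  have "A m \<le> D m" unfolding D_def using A_pos[of m] by (simp add: mult_le_cancel_right1)
  then show ?thesis using Suc A_pos[of m] D_le1[of m] by (simp add: ga_def)
qed

lemma summable_geo_bound:
  fixes f :: "nat \<Rightarrow> real"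
  assumes "\<And>n. \<bar>f n\<bar> \<le> 1" "\<bar>x\<bar> < 1"
  shows "summable (\<lambda>n. f n * x ^ n)"
proof (rule summable_comparison_test[where g="\<lambda>n. \<bar>x\<bar>^n"])
  show "\<exists>N. \<forall>n\<ge>N. norm (f n * x ^ n) \<le> \<bar>x\<bar> ^ n"
    using assms(1) by (auto simp: abs_mult power_abs intro!: mult_left_le_one_le)
  show "summable (\<lambda>n. \<bar>x\<bar> ^ n)" using assms(2) by (simp add: summable_geometric)
qed

lemma sum_D: assumes "\<bar>x\<bar> < 1" shows "summable (\<lambda>n. D n * x ^ n)"
proof -
  have "\<And>n. \<bar>D n\<bar> \<le> 1" using D_pos D_le1 by (simp add: less_imp_le)
  then show ?thesis using summable_geo_bound assms by blast
qed

lemma sum_ga: "\<bar>x\<bar> < 1 \<Longrightarrow> summable (\<lambda>n. ga n * x ^ n)"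
  using ga_bound by (intro summable_geo_bound) auto

lemma diffs_ga: "diffs ga = D"
  by (auto simp: diffs_def ga_def D_def fun_eq_iff)

lemma G_deriv: "\<bar>x\<bar> < 1 \<Longrightarrow> (G has_real_derivative G' x) (at x)"
proof -
  assume x: "\<bar>x\<bar> < 1"
  have "((\<lambda>z. \<Sum>n. ga n * z^n) has_field_derivative (\<Sum>n. diffs ga n * x^n)) (at x)"
    by (rule termdiffs_strong'[where K=1]) (use x sum_ga in auto)
  then show ?thesis unfolding G_def[abs_def] G'_def diffs_ga .
qed

lemma G_0: "G 0 = 0"
  by (simp add: G_def ga_def split: nat.splits)

lemma G_eq: assumes "\<bar>x\<bar> < 1" shows "G x = x * hyp2F1 c d (c + d) x"
proof -
  have t: "(\<lambda>n. pochhammer c n * pochhammer d n / pochhammer (c + d) n * x ^ n / fact n) = (\<lambda>n. A n * x ^ n)"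
    by (simp add: A_def fun_eq_iff divide_inverse mult_ac)
  have "\<And>n. \<bar>A n\<bar> \<le> 1" using ga_bound by (metis ga_def old.nat.simps(5))
  then have "summable (\<lambda>n. A n * x ^ n)" using summable_geo_bound assms by blast
  then have "(\<lambda>n. x * (A n * x ^ n)) sums (x * (\<Sum>n. A n * x ^ n))"
    by (intro sums_mult summable_sums)
  then have "(\<lambda>n. ga (Suc n) * x ^ Suc n) sums (x * (\<Sum>n. A n * x ^ n))"
    by (simp add: ga_def mult_ac)
  from sums_Suc[OF this] have "(\<lambda>n. ga n * x ^ n) sums (x * (\<Sum>n. A n * x ^ n))"
    by (simp add: ga_def)
  then show ?thesis unfolding G_def hyp2F1_def t by (simp add: sums_iff)
qed

definition E :: "nat \<Rightarrow> real" where "E n = D n - D (Suc n)"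

lemma E_nonneg: "E n \<ge> 0" using D_Suc_le unfolding E_def by simp

lemma Q_form: assumes "\<bar>x\<bar> < 1"
  shows "summable (\<lambda>n. E n * x ^ Suc n)" and "(1 - x) * G' x = 1 - (\<Sum>n. E n * x ^ Suc n)"
proof -
  have sD: "summable (\<lambda>n. D n * x ^ n)" using sum_D assms .
  have s1: "summable (\<lambda>n. D (Suc n) * x ^ Suc n)" using sD by (subst summable_Suc_iff)
  have e1: "(\<Sum>n. D (Suc n) * x ^ Suc n) = G' x - 1"
    using suminf_split_head[OF sD] by (simp add: G'_def D_def A_0)
  have s2: "summable (\<lambda>n. x * (D n * x ^ n))" using sD by (rule summable_mult)
  have e2: "(\<Sum>n. x * (D n * x ^ n)) = x * G' x" using suminf_mult[OF sD] by (simp add: G'_def)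
  have eq: "(\<lambda>n. E n * x ^ Suc n) = (\<lambda>n. x * (D n * x ^ n) - D (Suc n) * x ^ Suc n)"
    by (simp add: E_def fun_eq_iff algebra_simps)
  show "summable (\<lambda>n. E n * x ^ Suc n)" unfolding eq by (rule summable_diff[OF s2 s1])
  have "(\<Sum>n. E n * x ^ Suc n) = x * G' x - (G' x - 1)"
    unfolding eq using suminf_diff[OF s2 s1] e1 e2 by simp
  then show "(1 - x) * G' x = 1 - (\<Sum>n. E n * x ^ Suc n)" by (simp add: algebra_simps)
qed

lemma Q_mono: assumes "0 \<le> y" "y \<le> x" "x < 1" shows "(1 - x) * G' x \<le> (1 - y) * G' y"
proof -
  have "(\<Sum>n. E n * y ^ Suc n) \<le> (\<Sum>n. E n * x ^ Suc n)"
    using Q_form(1)[of x] Q_form(1)[of y] assms E_nonneg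
    by (intro suminf_le) (auto intro!: mult_left_mono power_mono simp del: power_Suc)
  then show ?thesis using Q_form(2)[of x] Q_form(2)[of y] assms by simp
qed

lemma G'_ge1: assumes "0 \<le> x" "x < 1" shows "G' x \<ge> 1"
proof -
  have "sum (\<lambda>n. D n * x ^ n) {..<1} \<le> G' x"
    unfolding G'_def using assms sum_D[of x] D_pos by (intro sum_le_suminf) (auto intro!: mult_nonneg_nonneg less_imp_le[OF D_pos])
  then show ?thesis by (simp add: D_def A_0)
qed

lemma G_ge_Q: assumes "0 \<le> x" "x < 1" shows "(1 - x) * G' x * (- ln (1 - x)) \<le> G x"
proof -
  define Q where "Q = (1 - x) * G' x"
  define k where "k y = G y + Q * ln (1 - y)" for y
  have "k 0 \<le> k x"
  proof (rule DERIV_nonneg_imp_nondecreasing[OF assms(1)])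
    fix y assume y: "0 \<le> y" "y \<le> x"
    have "(k has_real_derivative (G' y + Q * (- 1 / (1 - y)))) (at y)"
      unfolding k_def[abs_def] using y assms
      by (auto intro!: derivative_eq_intros G_deriv simp: field_simps)
    moreover have "G' y + Q * (- 1 / (1 - y)) \<ge> 0"
    proof -
      have "Q \<le> (1 - y) * G' y" unfolding Q_def using Q_mono y assms by simp
      then have "Q / (1 - y) \<le> G' y" using y assms by (simp add: divide_simps mult.commute)
      then show ?thesis by simp
    qed
    ultimately show "\<exists>z. (k has_real_derivative z) (at y) \<and> 0 \<le> z" by blast
  qed
  then show ?thesis by (simp add: k_def G_0 Q_def)
qed

lemma G_pos: assumes "0 < x" "x < 1" shows "G x > 0"
proof -
  have "(1 - x) * G' x > 0" using G'_ge1[of x] assms by simp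
  moreover have "- ln (1 - x) > 0" using assms by simp
  ultimately show ?thesis using G_ge_Q[of x] assms by (smt (verit) mult_pos_pos)
qed

lemma G_mono: assumes "0 \<le> y" "y \<le> x" "x < 1" shows "G y \<le> G x"
proof (rule DERIV_nonneg_imp_nondecreasing[OF assms(2)])
  fix z assume "y \<le> z" "z \<le> x"
  then show "\<exists>w. (G has_real_derivative w) (at z) \<and> 0 \<le> w"
    using G_deriv[of z] G'_ge1[of z] assms by (intro exI[of _ "G' z"]) auto
qed

lemma key_ineq: "G' (sg u) * (sg u * (1 - sg u)) * u \<le> G (sg u)"
proof -
  define x where "x = sg u"
  have x: "0 < x" "x < 1" using sg_bounds unfolding x_def by auto
  have omx: "1 - x = 1 / (1 + exp u)" unfolding x_def sg_def using epn[of u] by (simp add: field_simps)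
  have e: "x = exp u * (1 - x)" unfolding omx unfolding x_def sg_def by simp
  have "ln x = ln (exp u * (1 - x))" using arg_cong[OF e, of ln] .
  also have "\<dots> = ln (exp u) + ln (1 - x)" using x by (intro ln_mult_pos) auto
  finally have lnx: "ln x = u + ln (1 - x)" by simp
  have "x * ln x \<le> 0" using x by (simp add: mult_nonneg_nonpos)
  moreover have "(1 - x) * ln (1 - x) \<le> 0" using x by (simp add: mult_nonneg_nonpos)
  ultimately have ux: "x * u \<le> - ln (1 - x)" unfolding lnx by (simp add: algebra_simps)
  have Q: "(1 - x) * G' x \<ge> 0" using G'_ge1[of x] x by simp
  have "G' x * (x * (1 - x)) * u = ((1 - x) * G' x) * (x * u)" by (simp add: algebra_simps)
  also have "\<dots> \<le> ((1 - x) * G' x) * (- ln (1 - x))" using mult_left_mono[OF ux Q] .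
  also have "\<dots> \<le> G x" using G_ge_Q x by simp
  finally show ?thesis unfolding x_def .
qed

lemma H_antimono: assumes "0 < p" "p \<le> q" shows "G (sg q) / q \<le> G (sg p) / p"
proof (rule DERIV_nonpos_imp_nonincreasing[OF assms(2)])
  fix u assume u: "p \<le> u" "u \<le> q"
  then have upos: "u > 0" using assms by simp
  have dsg: "(sg has_real_derivative sg u * (1 - sg u)) (at u)"
  proof -
    have "(sg has_real_derivative (exp u * (1 + exp u) - exp u * exp u) / (1 + exp u)^2) (at u)"
      unfolding sg_def[abs_def] using epn[of u] by (auto intro!: derivative_eq_intros simp: power2_eq_square)
    moreover have "(exp u * (1 + exp u) - exp u * exp u) / (1 + exp u)^2 = sg u * (1 - sg u)"
      unfolding sg_def using epn[of u] by (simp add: field_simps power2_eq_square)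
    ultimately show ?thesis by simp
  qed
  have dG: "(G has_real_derivative G' (sg u)) (at (sg u))"
    using G_deriv sg_bounds[of u] by simp
  have "((\<lambda>v. G (sg v) / v) has_real_derivative
      ((G' (sg u) * (sg u * (1 - sg u))) * u - G (sg u) * 1) / (u * u)) (at u)"
    using DERIV_chain2[OF dG dsg] upos by (intro derivative_eq_intros) auto
  moreover have "((G' (sg u) * (sg u * (1 - sg u))) * u - G (sg u) * 1) / (u * u) \<le> 0"
    using key_ineq[of u] by (intro divide_nonpos_nonneg) auto
  ultimately show "\<exists>y. ((\<lambda>v. G (sg v) / v) has_real_derivative y) (at u) \<and> y \<le> 0" by blast
qed

end

theorem mainTheorem9:
  fixes c d a b s :: real and g :: "real \<Rightarrow> real"
  assumes "c > 0" and "d > 0" and "c * d \<le> 1"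
    and "\<And>x. 0 < x \<Longrightarrow> x < 1 \<Longrightarrow> g x = x * hyp2F1 c d (c + d) x"
    and "a > 0" and "b \<ge> a" and "s \<ge> 1"
  shows "1 \<le> g (s powr b / (1 + s powr b)) / g (s powr a / (1 + s powr a))
    \<and> g (s powr b / (1 + s powr b)) / g (s powr a / (1 + s powr a)) \<le> b / a"
proof -
  note cd = assms(1,2,3)
  define t where "t = ln s"
  have t: "t \<ge> 0" using assms(7) by (simp add: t_def)
  have sp: "\<And>e. s powr e / (1 + s powr e) = sg (e * t)"
    using assms(7) unfolding sg_def by (simp add: powr_def t_def)
  have gG: "\<And>e. g (sg e) = G c d (sg e)"
  proof -
    fix e
    have "\<bar>sg e\<bar> < 1" using sg_bounds[of e] by simp
    then show "g (sg e) = G c d (sg e)"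
      using assms(4)[OF sg_bounds[of e]] G_eq[OF cd] by simp
  qed
  define p where "p = G c d (sg (b * t))"
  define q where "q = G c d (sg (a * t))"
  have q: "q > 0" unfolding q_def using G_pos[OF cd sg_bounds] .
  have le: "a * t \<le> b * t" using assms(6) t by (simp add: mult_right_mono)
  have pq: "q \<le> p" unfolding p_def q_def
    using G_mono[OF cd _ sg_mono[OF le] sg_bounds(2)] sg_bounds(1)[of "a*t"] by simp
  have up: "p / q \<le> b / a"
  proof (cases "t = 0")
    case True
    then have "p = q" unfolding p_def q_def by simp
    then show ?thesis using q assms(5,6) by simp
  next
    case False
    then have tp: "t > 0" using t by simp
    have "p / (b * t) \<le> q / (a * t)" unfolding p_def q_def
      using H_antimono[OF cd _ le] assms(5) tp by simp
    then have "p * (a * t) \<le> q * (b * t)" using tp assms(5,6)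
      by (simp add: divide_simps split: if_splits)
    then have "p * a \<le> q * b" using tp by (simp add: mult.assoc[symmetric])
    then show ?thesis using q assms(5) by (simp add: divide_simps mult.commute)
  qed
  show ?thesis unfolding sp gG using pq up q by (simp add: p_def q_def)
qed

end
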